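(* (1) For every positive divisor $\delta$ of $\lambda(2)$, $\displaystyle\sum_{\substack{a\in U_2\\ \mathrm{ind}_2(a)=\delta}}a\equiv 1\pmod 2$. (2) For every positive divisor $\delta$ of $\lambda(4)$, $\displaystyle\sum_{\substack{a\in U_4\\ \mathrm{ind}_4(a)=\delta}}a\equiv (-1)^{\delta+1}\pmod 4$. (3) For every positive divisor $\delta$ of $\lambda(8)$, $\displaystyle\sum_{\substack{a\in U_8\\ \mathrm{ind}_8(a)=\delta}}a\equiv (-1)^{\delta+1}\pmod 8$. (4) Let $\alpha>3$ and $\delta=2^{\beta}$ with $1<\beta\le\alpha-2$. Then $\displaystyle\sum_{\substack{a\in U_{2^\alpha}\\ \mathrm{ind}_{2^\alpha}(a)=\delta}}a\equiv 0\pmod{2^\alpha}$. (5) Let $p$ be an odd prime, $\alpha$ a positive integer, and $\delta$ a positive divisor of $\lambda(p^\alpha)=\phi(p^\alpha)$. Then $$\sum_{\substack{a\in U_{p^\alpha}\\ \mathrm{ind}_{p^\alpha}(a)=\delta}}a\equiv \mu\big((\delta,p-1)\big)\,\phi\big(p^{\mathrm{ord}_p(\delta)}\big)\pmod{p^\alpha}.$$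
   Context: $U_m$ denotes the set of invertible residue classes in $\mathbb{Z}/m\mathbb{Z}$ (sums run over one representative of each such class). For $a$ coprime to $m$, $\mathrm{ind}_m(a)$ is the multiplicative order of $a$ modulo $m$. $\lambda(m)$ is the Carmichael function: the smallest $k>0$ such that $a^k\equiv 1\pmod m$ for all $a\in U_m$. $\mu$ is the Möbius function, $\phi$ Euler's totient function, $(x,y)$ the greatest common divisor, and $\mathrm{ord}_p(n)=\max\{k: p^k\mid n\}$. *)

theory Defs
  imports "HOL-Number_Theory.Number_Theory" "HOL-Computational_Algebra.Squarefree"
begin

definition moebius_mu :: "nat \<Rightarrow> int" where
  "moebius_mu n = (if n > 0 \<and> squarefree n then (-1) ^ card (prime_factors n) else 0)"

text \<open>Sum of the residues in U_m (representatives 1..m coprime to m) of multiplicative order d.\<close>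
definition ind_sum :: "nat \<Rightarrow> nat \<Rightarrow> int" where
  "ind_sum m d = (\<Sum>a\<in>{a\<in>totatives m. ord m a = d}. int a)"

end

theory Submission
  imports Defs
begin

lemma cop2pow: "coprime k ((2::nat) ^ n) \<longleftrightarrow> odd k \<or> n = 0"
  by (simp add: coprime_power_right_iff coprime_right_2_iff_odd)
lemma tot8: "totatives 8 = {1,3,5,7::nat}"
proof -
  have "k \<in> totatives 8 \<longleftrightarrow> k \<in> {1,3,5,7}" for k :: nat
  proof -
    have "coprime k 8 \<longleftrightarrow> odd k" using cop2pow[of k 3] by simp
    thus ?thesis unfolding in_totatives_iff by auto presburger+
  qed
  thus ?thesis by blast
qed
lemma tot4: "totatives 4 = {1,3::nat}"
proof -
  have "k \<in> totatives 4 \<longleftrightarrow> k \<in> {1,3}" for k :: nat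
  proof -
    have "coprime k 4 \<longleftrightarrow> odd k" using cop2pow[of k 2] by simp
    thus ?thesis unfolding in_totatives_iff by auto presburger+
  qed
  thus ?thesis by blast
qed
lemma tot2: "totatives 2 = {1::nat}"
proof -
  have "totatives 2 = {0<..<2::nat}" by (rule totatives_prime) simp
  also have "{0<..<2::nat} = {1}" by auto
  finally show ?thesis .
qed
lemma C8: "Carmichael 8 = 2"
  using Carmichael_twopow_ge_8[of 3] by simp
lemma dvd2: "\<delta> dvd 2 \<Longrightarrow> \<delta> = 1 \<or> \<delta> = (2::nat)"
  using dvd_imp_le[of \<delta> 2] by (cases "\<delta> = 0"; cases "\<delta> = 1") auto
lemma o83: "ord 8 (3::nat) = 2" by (simp add: ord_eq_2_iff cong_def)
lemma o85: "ord 8 (5::nat) = 2" by (simp add: ord_eq_2_iff cong_def)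
lemma o87: "ord 8 (7::nat) = 2" by (simp add: ord_eq_2_iff cong_def)
lemma part1: "\<forall>\<delta>::nat. \<delta> > 0 \<and> \<delta> dvd Carmichael 2 \<longrightarrow> [ind_sum 2 \<delta> = 1] (mod 2)"
proof -
  have a: "{a \<in> {1::nat}. ord 2 a = 1} = {1}" by auto
  have 1: "ind_sum 2 1 = 1" unfolding ind_sum_def tot2 a by simp
  show ?thesis
  proof (intro allI impI)
    fix \<delta> :: nat assume "0 < \<delta> \<and> \<delta> dvd Carmichael 2"
    then have "\<delta> dvd 1" by simp
    then have "\<delta> = 1" by simp
    then show "[ind_sum 2 \<delta> = 1] (mod 2)" using 1 by simp
  qed
qed
lemma part2: "\<forall>\<delta>::nat. \<delta> > 0 \<and> \<delta> dvd Carmichael 4 \<longrightarrow> [ind_sum 4 \<delta> = (-1) ^ (\<delta> + 1)] (mod 4)"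
proof -
  have a: "{a \<in> {1::nat, 3}. ord 4 a = 1} = {1}" by auto
  have b: "{a \<in> {1::nat, 3}. ord 4 a = 2} = {3}" by auto
  have 1: "ind_sum 4 1 = 1" unfolding ind_sum_def tot4 a by simp
  have 2: "ind_sum 4 2 = 3" unfolding ind_sum_def tot4 b by simp
  show ?thesis
  proof (intro allI impI)
    fix \<delta> :: nat assume "0 < \<delta> \<and> \<delta> dvd Carmichael 4"
    then have "\<delta> dvd 2" by simp
    then have "\<delta> = 1 \<or> \<delta> = 2" by (rule dvd2)
    then show "[ind_sum 4 \<delta> = (-1) ^ (\<delta> + 1)] (mod 4)"
    proof
      assume "\<delta> = 1" thus ?thesis using 1 by (simp add: cong_def)
    next
      assume "\<delta> = 2" thus ?thesis using 2 by (simp add: cong_def)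
    qed
  qed
qed
lemma part3: "\<forall>\<delta>::nat. \<delta> > 0 \<and> \<delta> dvd Carmichael 8 \<longrightarrow> [ind_sum 8 \<delta> = (-1) ^ (\<delta> + 1)] (mod 8)"
proof -
  have a: "{a \<in> {1::nat, 3, 5, 7}. ord 8 a = 1} = {1}" by (auto simp: o83 o85 o87)
  have b: "{a \<in> {1::nat, 3, 5, 7}. ord 8 a = 2} = {3,5,7}" by (auto simp: o83 o85 o87)
  have 1: "ind_sum 8 1 = 1" unfolding ind_sum_def tot8 a by simp
  have 2: "ind_sum 8 2 = 15" unfolding ind_sum_def tot8 b by simp
  show ?thesis
  proof (intro allI impI)
    fix \<delta> :: nat assume "0 < \<delta> \<and> \<delta> dvd Carmichael 8"
    then have "\<delta> dvd 2" using C8 by simp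
    then have "\<delta> = 1 \<or> \<delta> = 2" by (rule dvd2)
    then show "[ind_sum 8 \<delta> = (-1) ^ (\<delta> + 1)] (mod 8)"
    proof
      assume "\<delta> = 1" thus ?thesis using 1 by (simp add: cong_def)
    next
      assume "\<delta> = 2" thus ?thesis using 2 by (simp add: cong_def)
    qed
  qed
qed



lemma neg_pow_cong:
  fixes m a k :: nat
  assumes "a \<le> m" "even k"
  shows "[(m - a) ^ k = a ^ k] (mod m)"
proof -
  have "[int (m - a) = - int a] (mod int m)"
    using assms(1) by (simp add: of_nat_diff cong_iff_dvd_diff)
  hence "[int (m - a) ^ k = (- int a) ^ k] (mod int m)" by (rule cong_pow)
  hence "[int ((m - a) ^ k) = int (a ^ k)] (mod int m)" using assms(2) by simp
  thus ?thesis using cong_int_iff by blast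
qed

lemma twopow_sym:
  fixes \<alpha> \<beta> a :: nat
  assumes "\<alpha> \<ge> 2" "\<beta> \<ge> 2" "a \<in> totatives (2^\<alpha>)" "ord (2^\<alpha>) a = 2^\<beta>"
  shows "2^\<alpha> - a \<in> totatives (2^\<alpha>)" "ord (2^\<alpha>) (2^\<alpha> - a) = 2^\<beta>"
        "a < 2^\<alpha>" "2 * a \<noteq> 2^\<alpha>"
proof -
  let ?m = "2^\<alpha> :: nat"
  have am: "a \<le> ?m" "0 < a" "coprime a ?m" using assms(3) by (auto simp: totatives_def)
  have odda: "odd a" using am(3) assms(1)
    by (metis coprime_commute coprime_right_2_iff_odd coprime_power_right_iff not_numeral_le_zero zero_less_iff_neq_zero) 
  show lt: "a < ?m" using am(1) odda assms(1)
    by (metis dvd_power even_numeral le_neq_implies_less not_numeral_le_zero zero_less_iff_neq_zero)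
  show "2 * a \<noteq> ?m"
  proof
    assume h: "2 * a = ?m"
    have "2^2 dvd (2::nat)^\<alpha>" using assms(1) by (rule le_imp_power_dvd)
    hence "4 dvd 2 * a" using h by simp
    then have "even a" by presburger
    thus False using odda by simp
  qed
  have oddb: "odd (?m - a)" using odda lt assms(1) by (simp add: even_diff_nat)
  show "?m - a \<in> totatives ?m" using oddb lt
    by (auto simp: totatives_def coprime_commute)
  have e1: "even (2^\<beta>::nat)" "even (2^(\<beta>-1)::nat)" using assms(2) by auto
  have n1: "[(?m - a) ^ 2^\<beta> = a ^ 2^\<beta>] (mod ?m)" by (rule neg_pow_cong[OF am(1) e1(1)])
  have n2: "[a ^ 2^\<beta> = 1] (mod ?m)" using assms(4) ord_divides[of a "2^\<beta>" ?m] by simp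
  have c1: "[(?m - a) ^ 2^\<beta> = 1] (mod ?m)" by (rule cong_trans[OF n1 n2])
  have d1: "ord ?m (?m - a) dvd 2^\<beta>" using c1 ord_divides[of "?m - a" "2^\<beta>" ?m] by blast
  have n3: "[(?m - a) ^ 2^(\<beta>-1) = a ^ 2^(\<beta>-1)] (mod ?m)" by (rule neg_pow_cong[OF am(1) e1(2)])
  have n4: "\<not> [a ^ 2^(\<beta>-1) = 1] (mod ?m)"
  proof
    assume "[a ^ 2^(\<beta>-1) = 1] (mod ?m)"
    hence "(2::nat)^\<beta> dvd 2^(\<beta>-1)" using assms(4) ord_divides[of a "2^(\<beta>-1)" ?m] by simp
    hence "\<beta> \<le> \<beta> - 1" by (rule power_dvd_imp_le) simp  
    thus False using assms(2) by simp
  qed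
  have d2: "\<not> ord ?m (?m - a) dvd 2^(\<beta>-1)"
  proof
    assume "ord ?m (?m - a) dvd 2^(\<beta>-1)"
    hence "[(?m - a) ^ 2^(\<beta>-1) = 1] (mod ?m)" using ord_divides[of "?m - a" "2^(\<beta>-1)" ?m] by blast
    hence "[a ^ 2^(\<beta>-1) = 1] (mod ?m)" using cong_trans[OF cong_sym[OF n3]] by blast
    thus False using n4 by blast
  qed
  from d1 obtain i where i: "i \<le> \<beta>" "ord ?m (?m - a) = 2^i"
    by (auto simp: divides_primepow_nat)
  have "i = \<beta>"
  proof (rule ccontr)
    assume "i \<noteq> \<beta>" hence "i \<le> \<beta> - 1" using i by simp
    hence "(2::nat)^i dvd 2^(\<beta>-1)" by (simp add: le_imp_power_dvd)
    thus False using d2 i by simp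
  qed
  thus "ord ?m (?m - a) = 2^\<beta>" using i by simp
qed

lemma part4_gen:
  fixes \<alpha> \<beta> :: nat
  assumes "\<alpha> \<ge> 2" "\<beta> \<ge> 2"
  shows "[ind_sum (2 ^ \<alpha>) (2 ^ \<beta>) = 0] (mod 2 ^ \<alpha>)"
proof -
  let ?m = "2^\<alpha> :: nat"
  define A where "A = {a \<in> totatives ?m. ord ?m a = 2^\<beta>}"
  define L where "L = {a \<in> A. 2 * a < ?m}"
  define U where "U = {a \<in> A. 2 * a > ?m}"
  have fin: "finite A" unfolding A_def by simp
  have AUL: "A = L \<union> U" "L \<inter> U = {}"
    using twopow_sym(4)[OF assms] unfolding L_def U_def A_def by (auto simp: linorder_neq_iff)
  have Uim: "U = (\<lambda>a. ?m - a) ` L"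
  proof safe
    fix a assume a: "a \<in> U"
    hence aA: "a \<in> A" "2 * a > ?m" by (auto simp: U_def)
    have lt: "a < ?m" using twopow_sym(3)[OF assms] aA(1) by (auto simp: A_def)
    have "?m - a \<in> L" using twopow_sym(1,2)[OF assms] aA lt by (auto simp: A_def L_def)
    moreover have "a = ?m - (?m - a)" using lt by simp
    ultimately show "a \<in> (\<lambda>a. ?m - a) ` L" by blast
  next
    fix a assume a: "a \<in> L"
    hence aA: "a \<in> A" "2 * a < ?m" by (auto simp: L_def)
    have lt: "a < ?m" using twopow_sym(3)[OF assms] aA(1) by (auto simp: A_def)
    show "?m - a \<in> U" using twopow_sym(1,2)[OF assms] aA lt by (auto simp: A_def U_def)
  qed
  have inj: "inj_on (\<lambda>a. ?m - a) L"
    by (rule inj_onI) (auto simp: L_def)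
  have "ind_sum ?m (2^\<beta>) = (\<Sum>a\<in>L. int a) + (\<Sum>a\<in>U. int a)"
    unfolding ind_sum_def A_def[symmetric] AUL(1)
    by (rule sum.union_disjoint) (use fin AUL in auto)
  also have "(\<Sum>a\<in>U. int a) = (\<Sum>a\<in>L. int (?m - a))"
    unfolding Uim by (rule sum.reindex[OF inj, unfolded comp_def])
  also have "(\<Sum>a\<in>L. int a) + (\<Sum>a\<in>L. int (?m - a)) = (\<Sum>a\<in>L. int ?m)"
    unfolding sum.distrib[symmetric]
  proof (rule sum.cong)
    fix a assume "a \<in> L"
    hence "a < ?m" using twopow_sym(3)[OF assms] by (auto simp: A_def L_def)
    thus "int a + int (?m - a) = int ?m" by simp
  qed simp
  also have "\<dots> = int (card L) * int ?m" by simp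
  finally have "ind_sum ?m (2^\<beta>) = int (card L) * int ?m" .
  thus ?thesis unfolding cong_0_iff by simp
qed

lemma part4: "\<forall>\<alpha> \<beta> :: nat. \<alpha> > 3 \<and> 1 < \<beta> \<and> \<beta> \<le> \<alpha> - 2 \<longrightarrow>
        [ind_sum (2 ^ \<alpha>) (2 ^ \<beta>) = 0] (mod 2 ^ \<alpha>)"
  using part4_gen by simp



lemma mu_1: "moebius_mu 1 = 1"
  by (simp add: moebius_mu_def)

lemma mu_prime_times:
  fixes q d :: nat
  assumes q: "prime q" and nd: "\<not> q dvd d" and d: "d > 0"
  shows "moebius_mu (q * d) = - moebius_mu d"
proof -
  have cop: "coprime q d" using q nd by (simp add: prime_imp_coprime)
  have sq: "squarefree (q * d) \<longleftrightarrow> squarefree d"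
    using squarefree_mono[of d "q*d"] squarefree_mult_coprime[OF cop] squarefree_prime[OF q] by auto
  have pf: "prime_factors (q * d) = insert q (prime_factors d)"
    using prime_factors_product[of q d] q d prime_prime_factors[OF q] by (auto simp: prime_gt_0_nat)
  have nin: "q \<notin> prime_factors d" using nd by auto
  have card: "card (prime_factors (q*d)) = Suc (card (prime_factors d))"
    unfolding pf using nin by simp
  show ?thesis
  proof (cases "squarefree d")
    case True
    thus ?thesis using d q sq card by (simp add: moebius_mu_def prime_gt_0_nat)
  next
    case False
    thus ?thesis using sq by (simp add: moebius_mu_def)
  qed
qed

lemma mu_prime_times_dvd:
  fixes q d :: nat
  assumes q: "prime q" and dv: "q dvd d"
  shows "moebius_mu (q * d) = 0"
proof -
  have "q ^ 2 dvd q * d" using dv by (simp add: power2_eq_square)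
  have "\<not> squarefree (q * d)"
  proof
    assume "squarefree (q * d)"
    hence "q dvd 1" using squarefreeD \<open>q ^ 2 dvd q * d\<close> by blast
    thus False using q by simp
  qed
  thus ?thesis by (simp add: moebius_mu_def)
qed

lemma mu_sum:
  fixes e :: nat
  assumes "e > 0"
  shows "(\<Sum>d | d dvd e. moebius_mu d) = (if e = 1 then 1 else 0)"
proof (cases "e = 1")
  case True
  thus ?thesis by (simp add: moebius_mu_def)
next
  case False
  then obtain q where q: "prime q" "q dvd e" using prime_factor_nat by blast
  then obtain e1 where e1: "e = q * e1" by blast
  have e1p: "e1 > 0" using e1 assms by auto
  define D0 where "D0 = {d. d dvd e1 \<and> \<not> q dvd d}"
  define D1 where "D1 = {d. d dvd e \<and> q dvd d}"
  have fin: "finite {d. d dvd e}" "finite {d. d dvd e1}" using assms e1p by auto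
  have split: "{d. d dvd e} = D0 \<union> D1" "D0 \<inter> D1 = {}"
  proof -
    show "{d. d dvd e} = D0 \<union> D1"
    proof safe
      fix d assume "d dvd e" "d \<notin> D1"
      hence "\<not> q dvd d" "d dvd q * e1" using e1 by (auto simp: D1_def)
      hence "coprime d q" "d dvd q * e1" using q(1) prime_imp_coprime[of q d] by (auto simp: coprime_commute)
      hence "d dvd e1" using coprime_dvd_mult_right_iff by blast
      thus "d \<in> D0" using \<open>\<not> q dvd d\<close> by (simp add: D0_def)
    qed (auto simp: D0_def D1_def e1)
    show "D0 \<inter> D1 = {}" by (auto simp: D0_def D1_def)
  qed
  have finD: "finite D0" "finite D1" using fin split by auto
  have D1im: "D1 = (\<lambda>d. q * d) ` {d. d dvd e1}"
  proof safe
    fix d assume "d \<in> D1"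
    hence "q dvd d" "d dvd q * e1" using e1 by (auto simp: D1_def)
    then obtain d' where "d = q * d'" "q * d' dvd q * e1" by blast
    moreover hence "d' dvd e1" using q(1) by (simp add: prime_gt_0_nat)
    ultimately show "d \<in> (\<lambda>d. q * d) ` {d. d dvd e1}" by blast
  qed (auto simp: D1_def e1)
  have inj: "inj_on (\<lambda>d. q * d) {d. d dvd e1}" using q(1) by (auto simp: inj_on_def prime_gt_0_nat)
  have "(\<Sum>d\<in>D1. moebius_mu d) = (\<Sum>d | d dvd e1. moebius_mu (q * d))"
    unfolding D1im by (subst sum.reindex[OF inj]) simp
  also have "\<dots> = (\<Sum>d\<in>D0. moebius_mu (q * d))"
    by (rule sum.mono_neutral_right) (use fin q in \<open>auto simp: D0_def mu_prime_times_dvd\<close>)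
  also have "\<dots> = (\<Sum>d\<in>D0. - moebius_mu d)"
    by (rule sum.cong) (use q e1p in \<open>auto simp: D0_def mu_prime_times intro!: mu_prime_times dest: dvd_imp_le\<close>)
  finally have s1: "(\<Sum>d\<in>D1. moebius_mu d) = - (\<Sum>d\<in>D0. moebius_mu d)" by (simp add: sum_negf)
  have "(\<Sum>d | d dvd e. moebius_mu d) = (\<Sum>d\<in>D0. moebius_mu d) + (\<Sum>d\<in>D1. moebius_mu d)"
    unfolding split(1) by (rule sum.union_disjoint) (use finD split in auto)
  thus ?thesis using s1 False by simp
qed



definition fval :: "nat \<Rightarrow> nat \<Rightarrow> int" where
  "fval p d = moebius_mu (gcd d (p - 1)) * int (totient (p ^ multiplicity p d))"

lemma sum_totient_prime_powers:
  assumes "prime (p::nat)"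
  shows "(\<Sum>i\<le>v. totient (p ^ i)) = p ^ v"
proof (induction v)
  case 0 then show ?case by simp
next
  case (Suc v)
  have "(\<Sum>i\<le>Suc v. totient (p ^ i)) = p ^ v + p ^ v * (p - 1)"
    using Suc totient_prime_power_Suc[OF assms, of v] by simp
  also have "\<dots> = p ^ Suc v" using assms prime_gt_0_nat[OF assms]
    by (simp add: algebra_simps)
  finally show ?case .
qed

lemma multiplicity_pow_times:
  assumes "prime (p::nat)" "\<not> p dvd d"
  shows "multiplicity p (p ^ i * d) = i"
  using assms by (intro multiplicity_decomposeI[OF refl]) auto

lemma fval_sum:
  fixes p n k :: nat
  assumes p: "prime p" and n: "n > 0" and nd: "n dvd p ^ k * (p - 1)"
  shows "(\<Sum>d | d dvd n. fval p d) = (if \<exists>j. n = p ^ j then int n else 0)"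
proof -
  define v where "v = multiplicity p n"
  define e where "e = n div p ^ v"
  have ndec: "n = p ^ v * e" unfolding e_def v_def using multiplicity_dvd[of p n] by (metis dvd_mult_div_cancel)
  have npe: "\<not> p dvd e" unfolding e_def v_def by (rule multiplicity_decompose) (use n p in auto)
  have ep: "e > 0" using ndec n by (cases "e = 0") auto
  have cope: "coprime e (p ^ k)" using npe p prime_imp_coprime[of p e] by (simp add: coprime_commute)
  have edvd: "e dvd p - 1"
  proof -
    have "e dvd p ^ k * (p - 1)" using nd ndec by (metis dvd_mult_right dvd_trans)
    thus ?thesis using cope coprime_dvd_mult_right_iff by blast
  qed
  have p0: "p > 0" using p by (simp add: prime_gt_0_nat)
  have copp: "coprime p (p - 1)" using p0 by (metis Suc_diff_1 coprime_Suc_left_nat)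
  define h where "h = (\<lambda>(i, d). p ^ i * d)"
  have bij: "bij_betw h ({..v} \<times> {d. d dvd e}) {d. d dvd n}"
  proof (rule bij_betwI')
    fix x y assume xy: "x \<in> {..v} \<times> {d. d dvd e}" "y \<in> {..v} \<times> {d. d dvd e}"
    obtain i d where x: "x = (i, d)" by (cases x)
    obtain j d' where y: "y = (j, d')" by (cases y)
    have nd1: "\<not> p dvd d" "\<not> p dvd d'" using xy npe x y by (auto dest: dvd_trans)
    show "(h x = h y) = (x = y)"
    proof
      assume "h x = h y"
      hence eq: "p ^ i * d = p ^ j * d'" by (simp add: h_def x y)
      hence "i = j" using multiplicity_pow_times[OF p nd1(1), of i] multiplicity_pow_times[OF p nd1(2), of j] by simp
      thus "x = y" using eq p0 x y by simp
    qed simp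
  next
    fix x assume "x \<in> {..v} \<times> {d. d dvd e}"
    then obtain i d where x: "x = (i, d)" "i \<le> v" "d dvd e" by auto
    have "p ^ i * d dvd p ^ v * e" using x by (intro mult_dvd_mono le_imp_power_dvd) auto
    thus "h x \<in> {d. d dvd n}" using x ndec by (simp add: h_def)
  next
    fix y assume "y \<in> {d. d dvd n}"
    hence y: "y dvd n" by simp
    define w where "w = multiplicity p y"
    define d where "d = y div p ^ w"
    have ydec: "y = p ^ w * d" unfolding d_def w_def using multiplicity_dvd[of p y] by (metis dvd_mult_div_cancel)
    have "y \<noteq> 0" using y n by auto
    hence npd: "\<not> p dvd d" unfolding d_def w_def by (rule multiplicity_decompose) (use p in auto)
    have "p ^ w dvd y" by (subst ydec) simp
    hence "p ^ w dvd n" using y by (rule dvd_trans)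
    hence wv: "w \<le> v" unfolding v_def using n p
      by (subst (asm) power_dvd_iff_le_multiplicity) auto
    have "d dvd y" by (subst ydec) simp
    hence "d dvd p ^ v * e" using dvd_trans[OF _ y] ndec by simp
    moreover have "coprime d (p ^ v)" using npd p prime_imp_coprime[of p d] by (simp add: coprime_commute)
    ultimately have "d dvd e" using coprime_dvd_mult_right_iff by blast
    thus "\<exists>x\<in>{..v} \<times> {d. d dvd e}. y = h x" using wv ydec by (auto simp: h_def)
  qed
  have fh: "fval p (h (i, d)) = moebius_mu d * int (totient (p ^ i))" if "d dvd e" for i d
  proof -
    have npd: "\<not> p dvd d" using that npe by (auto dest: dvd_trans)
    have dp: "d dvd p - 1" using that edvd by (rule dvd_trans)
    have "coprime (p - 1) (p ^ i)" using copp by (simp add: coprime_commute)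
    hence "gcd (p ^ i * d) (p - 1) = gcd d (p - 1)"
      by (rule gcd_mult_left_left_cancel)
    also have "\<dots> = d" using dp by (simp add: gcd_nat.absorb1)
    finally show ?thesis using multiplicity_pow_times[OF p npd, of i] by (simp add: h_def fval_def)
  qed
  have "(\<Sum>d | d dvd n. fval p d) = (\<Sum>x\<in>{..v} \<times> {d. d dvd e}. fval p (h x))"
    by (rule sum.reindex_bij_betw[OF bij, symmetric])
  also have "\<dots> = (\<Sum>(i, d)\<in>{..v} \<times> {d. d dvd e}. int (totient (p ^ i)) * moebius_mu d)"
    by (rule sum.cong) (auto simp: fh)
  also have "\<dots> = (\<Sum>i\<le>v. int (totient (p ^ i))) * (\<Sum>d | d dvd e. moebius_mu d)"
    by (simp add: sum_product sum.cartesian_product)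
  also have "(\<Sum>i\<le>v. int (totient (p ^ i))) = int (p ^ v)"
    using sum_totient_prime_powers[OF p, of v] by (metis of_nat_sum)
  also have "(\<Sum>d | d dvd e. moebius_mu d) = (if e = 1 then 1 else 0)" by (rule mu_sum[OF ep])
  also have "int (p ^ v) * (if e = 1 then 1 else 0) = (if \<exists>j. n = p ^ j then int n else 0)"
  proof (cases "e = 1")
    case True thus ?thesis using ndec by auto
  next
    case False
    have "\<not> (\<exists>j. n = p ^ j)"
    proof
      assume "\<exists>j. n = p ^ j"
      then obtain j where j: "n = p ^ j" by blast
      hence "v = j" unfolding v_def using p by simp
      hence "e = 1" using j ndec p0 by simp
      thus False using False by simp
    qed
    thus ?thesis using False by simp
  qed
  finally show ?thesis .
qed



lemma lift_step:
  fixes y :: int and p j :: nat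
  assumes p: "prime p" and y: "[y = 1] (mod int p ^ j)" and j: "j \<ge> 1"
  shows "[y ^ p = 1] (mod int p ^ Suc j)"
proof -
  have d1: "int p ^ j dvd y - 1" using y by (simp add: cong_iff_dvd_diff)
  have "int p dvd int p ^ j" using j by (cases j) auto
  hence yp: "[y = 1] (mod int p)" using cong_dvd_modulus[OF y] by blast
  have "[(\<Sum>i<p. y ^ i) = (\<Sum>i<p. 1)] (mod int p)"
    by (rule cong_sum) (use cong_pow[OF yp] in simp)
  hence "int p dvd (\<Sum>i<p. y ^ i) - int p" by (simp add: cong_iff_dvd_diff)
  hence "int p dvd (\<Sum>i<p. y ^ i)" by (metis diff_add_cancel dvd_add dvd_refl)
  hence "int p ^ j * int p dvd (y - 1) * (\<Sum>i<p. y ^ i)" using d1 by (intro mult_dvd_mono)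
  hence "int p ^ Suc j dvd y ^ p - 1" by (simp add: power_diff_1_eq mult.commute)
  thus ?thesis by (simp add: cong_iff_dvd_diff)
qed

lemma lift_int:
  fixes x :: int and p i k :: nat
  assumes p: "prime p" and x: "[x = 1] (mod int p ^ i)" and i: "i \<ge> 1"
  shows "[x ^ (p ^ k) = 1] (mod int p ^ (i + k))"
proof (induction k)
  case 0 thus ?case using x by simp
next
  case (Suc k)
  have "[(x ^ (p ^ k)) ^ p = 1] (mod int p ^ Suc (i + k))"
    by (rule lift_step[OF p Suc]) (use i in simp)
  thus ?case by (simp add: power_mult[symmetric] mult_ac)
qed

lemma lift:
  fixes x p i k :: nat
  assumes p: "prime p" and x: "[x = 1] (mod p ^ i)" and i: "i \<ge> 1"
  shows "[x ^ (p ^ k) = 1] (mod p ^ (i + k))"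
proof -
  have "[int x = int 1] (mod int (p ^ i))" using x by (simp only: cong_int_iff)
  hence "[int x ^ (p ^ k) = 1] (mod int p ^ (i + k))" using lift_int[OF p _ i] by simp
  hence "[int (x ^ (p ^ k)) = int 1] (mod int (p ^ (i + k)))" by simp
  thus ?thesis by (simp only: cong_int_iff)
qed

lemma card_roots_le:
  fixes m g n :: nat
  assumes m: "m > 1" and g: "residue_primroot m g" and n: "n dvd totient m" "n > 0"
  shows "card {a \<in> totatives m. [a ^ n = 1] (mod m)} \<le> n"
proof -
  define c where "c = totient m div n"
  have tc: "totient m = c * n" using n unfolding c_def by simp
  have bij: "bij_betw (\<lambda>i. g ^ i mod m) {..<totient m} (totatives m)"
    by (rule residue_primroot_is_generator[OF m g])
  have og: "ord m g = totient m" using g by (simp add: residue_primroot_def)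
  have sub: "{a \<in> totatives m. [a ^ n = 1] (mod m)} \<subseteq> (\<lambda>l. g ^ (c * l) mod m) ` {..<n}"
  proof
    fix a assume a: "a \<in> {a \<in> totatives m. [a ^ n = 1] (mod m)}"
    then obtain i where i: "i < totient m" "a = g ^ i mod m"
      using bij unfolding bij_betw_def by (metis (no_types, lifting) imageE lessThan_iff mem_Collect_eq)
    have "[(g ^ i mod m) ^ n = (g ^ i) ^ n] (mod m)" by (intro cong_pow) (simp add: cong_def)
    hence "[g ^ (i * n) = 1] (mod m)" using a i by (metis (no_types, lifting) cong_sym cong_trans mem_Collect_eq power_mult)
    hence "c * n dvd i * n" using og tc ord_divides by metis
    hence "c dvd i" using n(2) by simp
    then obtain l where l: "i = c * l" by blast
    have "l < n" using i(1) l tc by (metis mult_less_cancel1 not_less_zero zero_less_mult_iff)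
    thus "a \<in> (\<lambda>l. g ^ (c * l) mod m) ` {..<n}" using i l by auto
  qed
  have "card {a \<in> totatives m. [a ^ n = 1] (mod m)} \<le> card ((\<lambda>l. g ^ (c * l) mod m) ` {..<n})"
    by (rule card_mono[OF _ sub]) simp
  also have "\<dots> \<le> n" using card_image_le[of "{..<n}" "(\<lambda>l. g ^ (c * l) mod m)"] by simp
  finally show ?thesis .
qed



lemma gauss2: "2 * (\<Sum>t<N. int t) = int N * (int N - 1)"
  by (induction N) (auto simp: algebra_simps)

lemma pset:
  fixes p \<alpha> j g :: nat
  assumes p: "prime p" and \<alpha>: "\<alpha> > 0" and j: "j \<le> \<alpha> - 1" and g: "residue_primroot (p ^ \<alpha>) g"
  shows "{a \<in> totatives (p ^ \<alpha>). [a ^ (p ^ j) = 1] (mod p ^ \<alpha>)} = (\<lambda>t. 1 + t * p ^ (\<alpha> - j)) ` {..<p ^ j}"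
proof -
  let ?m = "p ^ \<alpha>" and ?q = "p ^ (\<alpha> - j)"
  have p1: "p > 1" using prime_gt_1_nat[OF p] by simp
  have m1: "?m > 1" by (rule one_less_power[OF p1 \<alpha>])
  have q0: "?q > 0" using p1 by simp
  have mq: "p ^ j * ?q = ?m" using j \<alpha> by (simp add: power_add[symmetric])
  have inj: "inj_on (\<lambda>t. 1 + t * ?q) {..<p ^ j}" using q0 by (auto simp: inj_on_def)
  have sub: "(\<lambda>t. 1 + t * ?q) ` {..<p ^ j} \<subseteq> {a \<in> totatives ?m. [a ^ (p ^ j) = 1] (mod ?m)}"
  proof safe
    fix t assume t: "t < p ^ j"
    have "(t + 1) * ?q \<le> p ^ j * ?q" using t by (intro mult_right_mono) auto
    hence "?q + t * ?q \<le> ?m" using mq by (simp add: algebra_simps)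
    hence le: "1 + t * ?q \<le> ?m" using q0 by linarith
    have c1: "[1 + t * ?q = 1] (mod ?q)" by (simp only: cong_def mod_mult_self1)
    have "p dvd ?q" by (rule dvd_power) (use j \<alpha> in auto)
    hence c2: "[1 + t * ?q = 1] (mod p)" using cong_dvd_modulus_nat[OF c1] by blast
    have "\<not> p dvd 1 + t * ?q"
    proof
      assume "p dvd 1 + t * ?q"
      hence "p dvd 1" using c2 by (metis cong_dvd_iff)
      thus False using p by simp
    qed
    hence "coprime (1 + t * ?q) p" using p prime_imp_coprime[of p "1 + t * ?q"] by (simp add: coprime_commute)
    hence cop: "coprime (1 + t * ?q) ?m" by simp
    have "[(1 + t * ?q) ^ (p ^ j) = 1] (mod p ^ ((\<alpha> - j) + j))"
      by (rule lift[OF p c1]) (use j \<alpha> in simp)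
    hence "[(1 + t * ?q) ^ (p ^ j) = 1] (mod ?m)" using j \<alpha> by simp
    thus "1 + t * ?q \<in> totatives ?m" "[(1 + t * ?q) ^ (p ^ j) = 1] (mod ?m)"
      using le cop by (auto simp: in_totatives_iff)
  qed
  have "p ^ j dvd p ^ (\<alpha> - 1)" using j by (simp add: le_imp_power_dvd)
  hence "p ^ j dvd totient ?m" using totient_prime_power[OF p \<alpha>] by simp
  hence cardle: "card {a \<in> totatives ?m. [a ^ (p ^ j) = 1] (mod ?m)} \<le> p ^ j"
    using card_roots_le[OF m1 g] p1 by simp
  have "card ((\<lambda>t. 1 + t * ?q) ` {..<p ^ j}) = p ^ j" using card_image[OF inj] by simp
  thus ?thesis using card_seteq[OF _ sub] cardle by simp
qed

lemma psum:
  fixes p \<alpha> j g :: nat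
  assumes p: "prime p" "odd p" and \<alpha>: "\<alpha> > 0" and j: "j \<le> \<alpha> - 1" and g: "residue_primroot (p ^ \<alpha>) g"
  shows "[(\<Sum>a\<in>{a \<in> totatives (p ^ \<alpha>). [a ^ (p ^ j) = 1] (mod p ^ \<alpha>)}. int a) = int (p ^ j)] (mod int (p ^ \<alpha>))"
proof -
  let ?m = "p ^ \<alpha>" and ?q = "p ^ (\<alpha> - j)" and ?N = "p ^ j"
  have q0: "?q > 0" using p by (simp add: prime_gt_0_nat)
  have mq: "?N * ?q = ?m" using j \<alpha> by (simp add: power_add[symmetric])
  have inj: "inj_on (\<lambda>t. 1 + t * ?q) {..<?N}" using q0 by (auto simp: inj_on_def)
  have "(\<Sum>a\<in>{a \<in> totatives ?m. [a ^ ?N = 1] (mod ?m)}. int a) = (\<Sum>t<?N. int (1 + t * ?q))"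
    unfolding pset[OF p(1) \<alpha> j g] by (subst sum.reindex[OF inj]) simp
  also have "\<dots> = (\<Sum>t<?N. 1 + int ?q * int t)" by (simp add: mult.commute)
  also have "\<dots> = int ?N + int ?q * (\<Sum>t<?N. int t)"
    by (simp add: sum.distrib sum_distrib_left)
  finally have S: "(\<Sum>a\<in>{a \<in> totatives ?m. [a ^ ?N = 1] (mod ?m)}. int a) = int ?N + int ?q * (\<Sum>t<?N. int t)" .
  define S' where "S' = (\<Sum>a\<in>{a \<in> totatives ?m. [a ^ ?N = 1] (mod ?m)}. int a)"
  have "2 * S' = 2 * int ?N + int ?q * (2 * (\<Sum>t<?N. int t))" unfolding S'_def S by (simp add: algebra_simps)
  also have "\<dots> = 2 * int ?N + int ?q * int ?N * (int ?N - 1)" unfolding gauss2 by (simp add: algebra_simps)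
  also have "int ?q * int ?N = int ?m" using mq by (metis mult.commute of_nat_mult)
  finally have "2 * S' = 2 * int ?N + int ?m * (int ?N - 1)" by simp
  hence "[2 * S' = 2 * int ?N] (mod int ?m)" by (simp add: cong_iff_dvd_diff)
  moreover have "coprime 2 (int ?m)" using p(2) by simp
  ultimately have "[S' = int ?N] (mod int ?m)" using cong_mult_lcancel by blast
  thus ?thesis unfolding S'_def .
qed



lemma perm_sum:
  fixes m h :: nat and A :: "nat set"
  assumes m: "m > 1" and h: "coprime h m" and A: "A \<subseteq> totatives m" and cl: "\<And>a. a \<in> A \<Longrightarrow> h * a mod m \<in> A"
  shows "[int h * (\<Sum>a\<in>A. int a) = (\<Sum>a\<in>A. int a)] (mod int m)"
proof -
  define \<pi> where "\<pi> = (\<lambda>a. h * a mod m)"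
  have fin: "finite A" by (rule finite_subset[OF A]) simp
  have inj: "inj_on \<pi> A"
  proof (rule inj_onI)
    fix a b assume ab: "a \<in> A" "b \<in> A" "\<pi> a = \<pi> b"
    hence "[h * a = h * b] (mod m)" by (simp add: \<pi>_def cong_def)
    hence "[a = b] (mod m)" using cong_mult_lcancel_nat[OF h] by blast
    moreover have "a < m" "b < m" using ab A totatives_less m by auto
    ultimately show "a = b" using cong_less_modulus_unique_nat by blast
  qed
  have im: "\<pi> ` A = A" using endo_inj_surj[OF fin _ inj] cl by (auto simp: \<pi>_def)
  have "(\<Sum>a\<in>A. int a) = (\<Sum>a\<in>A. int (\<pi> a))"
    using sum.reindex[OF inj, of int] im by simp
  also have "[\<dots> = (\<Sum>a\<in>A. int h * int a)] (mod int m)"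
    by (rule cong_sum) (simp add: \<pi>_def cong_def of_nat_mod)
  also have "(\<Sum>a\<in>A. int h * int a) = int h * (\<Sum>a\<in>A. int a)" by (simp add: sum_distrib_left)
  finally show ?thesis by (rule cong_sym)
qed



lemma Qlem:
  fixes p \<alpha> n :: nat
  assumes p: "prime p" "odd p" and \<alpha>: "\<alpha> > 0" and n: "n > 0" "n dvd totient (p ^ \<alpha>)"
  shows "[(\<Sum>a\<in>{a \<in> totatives (p ^ \<alpha>). ord (p ^ \<alpha>) a dvd n}. int a)
          = (if \<exists>j. n = p ^ j then int n else 0)] (mod int (p ^ \<alpha>))"
proof -
  let ?m = "p ^ \<alpha>"
  define \<phi> where "\<phi> = totient ?m"
  have p1: "p > 1" using prime_gt_1_nat[OF p(1)] by simp
  have m1: "?m > 1" by (rule one_less_power[OF p1 \<alpha>])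
  have phi: "\<phi> = p ^ (\<alpha> - 1) * (p - 1)" unfolding \<phi>_def by (rule totient_prime_power[OF p(1) \<alpha>])
  obtain g where "\<forall>k>0. residue_primroot (p ^ k) g"
    using residue_primroot_odd_prime_power_exists[OF p] by metis
  hence g: "residue_primroot ?m g" using \<alpha> by blast
  have og: "ord ?m g = \<phi>" and cg: "coprime ?m g" using g by (auto simp: residue_primroot_def \<phi>_def)
  have Aeq: "{a \<in> totatives ?m. ord ?m a dvd n} = {a \<in> totatives ?m. [a ^ n = 1] (mod ?m)}"
    using ord_divides by blast
  show ?thesis
  proof (cases "\<exists>j. n = p ^ j")
    case True
    then obtain j where j: "n = p ^ j" by blast
    have cop: "coprime (p ^ j) (p - 1)"
      using p1 by (metis Suc_diff_1 coprime_Suc_left_nat coprime_power_left_iff less_imp_Suc_add zero_less_Suc)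
    have "p ^ j dvd p ^ (\<alpha> - 1) * (p - 1)" using n(2) j phi \<phi>_def by simp
    hence "p ^ j dvd p ^ (\<alpha> - 1)" using cop coprime_dvd_mult_left_iff by blast
    hence jl: "j \<le> \<alpha> - 1" using p1 power_dvd_imp_le by blast
    show ?thesis unfolding Aeq using psum[OF p \<alpha> jl g] True j by simp
  next
    case False
    define v where "v = multiplicity p n"
    define e where "e = n div p ^ v"
    have ndec: "n = p ^ v * e" unfolding e_def v_def using multiplicity_dvd[of p n] by (metis dvd_mult_div_cancel)
    have npe: "\<not> p dvd e" unfolding e_def v_def by (rule multiplicity_decompose) (use n p1 in auto)
    have "e \<noteq> 1" using False ndec by auto
    then obtain q where q: "prime q" "q dvd e" using prime_factor_nat by blast
    have qp: "q \<noteq> p" using q npe by auto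
    have qn: "q dvd n" using q ndec by simp
    have qphi: "q dvd \<phi>" using qn n(2) \<phi>_def dvd_trans by blast
    define c where "c = \<phi> div q"
    have phic: "\<phi> = c * q" using qphi unfolding c_def by simp
    have "\<phi> > 0" using phi p1 by simp
    hence c0: "c > 0" using phic by (cases "c = 0") auto
    define h where "h = g ^ c"
    have ch: "coprime h ?m" using cg by (auto simp: h_def coprime_commute)
    have hn: "[h ^ n = 1] (mod ?m)"
    proof -
      obtain n' where n': "n = q * n'" using qn by blast
      have "h ^ n = g ^ (\<phi> * n')" unfolding h_def using phic n' by (simp add: power_mult[symmetric] mult_ac)
      moreover have "ord ?m g dvd \<phi> * n'" using og by simp
      ultimately show ?thesis using ord_divides by metis
    qed
    have hne: "\<not> [h = 1] (mod p)"
    proof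
      assume "[h = 1] (mod p)"
      hence "[h ^ (p ^ (\<alpha> - 1)) = 1] (mod p ^ (1 + (\<alpha> - 1)))" using lift[OF p(1), of h 1] by simp
      hence "[g ^ (c * p ^ (\<alpha> - 1)) = 1] (mod ?m)" using \<alpha> by (simp add: h_def power_mult)
      hence "c * q dvd c * p ^ (\<alpha> - 1)" using og phic ord_divides by metis
      hence "q dvd p ^ (\<alpha> - 1)" using c0 by simp
      hence "q dvd p" using q(1) prime_dvd_power by blast
      hence "q = p" using q(1) p(1) primes_dvd_imp_eq by blast
      thus False using qp by simp
    qed
    define A where "A = {a \<in> totatives ?m. ord ?m a dvd n}"
    have cl: "h * a mod ?m \<in> A" if a: "a \<in> A" for a
    proof -
      have at: "a \<in> totatives ?m" "ord ?m a dvd n" using a by (auto simp: A_def)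
      have ca: "coprime a ?m" using at by (simp add: in_totatives_iff)
      have cha: "coprime (h * a) ?m" using ca ch by auto
      hence cham: "coprime (h * a mod ?m) ?m" by (metis coprime_commute coprime_mod_right_iff m1 not_one_less_zero zero_less_iff_neq_zero)
      have "h * a mod ?m \<noteq> 0"
      proof
        assume "h * a mod ?m = 0"
        hence "coprime 0 ?m" using cham by simp
        hence "?m = 1" by auto
        thus False using m1 by linarith
      qed
      moreover have "h * a mod ?m < ?m" by (rule mod_less_divisor) (use m1 in linarith)
      ultimately have tt: "h * a mod ?m \<in> totatives ?m" using cham by (simp add: in_totatives_iff)
      have "[a ^ n = 1] (mod ?m)" using at(2) ord_divides by blast
      hence "[h ^ n * a ^ n = 1 * 1] (mod ?m)" using hn by (intro cong_mult)
      hence "[(h * a) ^ n = 1] (mod ?m)" by (simp add: power_mult_distrib)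
      hence "ord ?m (h * a) dvd n" using ord_divides by blast
      hence "ord ?m (h * a mod ?m) dvd n" by simp
      thus ?thesis using tt by (simp add: A_def)
    qed
    have Asub: "A \<subseteq> totatives ?m" by (auto simp: A_def)
    have perm: "[int h * (\<Sum>a\<in>A. int a) = (\<Sum>a\<in>A. int a)] (mod int ?m)"
      by (rule perm_sum[OF m1 ch Asub cl])
    have "\<not> int p dvd int h - 1"
    proof
      assume "int p dvd int h - 1"
      hence "[int h = int 1] (mod int p)" by (simp add: cong_iff_dvd_diff)
      hence "[h = 1] (mod p)" by (simp only: cong_int_iff)
      thus False using hne by simp
    qed
    hence "coprime (int h - 1) (int p)"
      using prime_imp_coprime[of "int p" "int h - 1"] p(1) by (simp add: coprime_commute)
    hence cop: "coprime (int h - 1) (int ?m)" by simp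
    have "[(int h - 1) * (\<Sum>a\<in>A. int a) = (int h - 1) * 0] (mod int ?m)"
      using perm by (simp add: cong_iff_dvd_diff algebra_simps)
    hence "[(\<Sum>a\<in>A. int a) = 0] (mod int ?m)" using cong_mult_lcancel[OF cop] by blast
    thus ?thesis using False by (simp add: A_def)
  qed
qed

lemma Plem:
  fixes m n :: nat
  assumes n: "n > 0"
  shows "(\<Sum>a\<in>{a \<in> totatives m. ord m a dvd n}. int a) = (\<Sum>d | d dvd n. ind_sum m d)"
proof -
  have "(\<Sum>d | d dvd n. ind_sum m d) = (\<Sum>d | d dvd n. \<Sum>a\<in>{x. x \<in> {a \<in> totatives m. ord m a dvd n} \<and> ord m x = d}. int a)"
  proof (rule sum.cong[OF refl])
    fix d assume "d \<in> {d. d dvd n}"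
    hence "{a \<in> totatives m. ord m a = d} = {x. x \<in> {a \<in> totatives m. ord m a dvd n} \<and> ord m x = d}" by auto
    thus "ind_sum m d = (\<Sum>a\<in>{x. x \<in> {a \<in> totatives m. ord m a dvd n} \<and> ord m x = d}. int a)"
      unfolding ind_sum_def by simp
  qed
  also have "\<dots> = (\<Sum>a\<in>{a \<in> totatives m. ord m a dvd n}. int a)"
    by (rule sum.group) (use n in auto)
  finally show ?thesis by simp
qed

lemma main5:
  fixes p \<alpha> :: nat
  assumes p: "prime p" "odd p" and \<alpha>: "\<alpha> > 0"
  shows "\<delta> > 0 \<Longrightarrow> \<delta> dvd totient (p ^ \<alpha>) \<Longrightarrow> [ind_sum (p ^ \<alpha>) \<delta> = fval p \<delta>] (mod int (p ^ \<alpha>))"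
proof (induction \<delta> rule: less_induct)
  case (less \<delta>)
  let ?m = "p ^ \<alpha>"
  define R where "R = {d. d dvd \<delta>} - {\<delta>}"
  have fin: "finite {d. d dvd \<delta>}" using less.prems by simp
  have IH: "[(\<Sum>d\<in>R. ind_sum ?m d) = (\<Sum>d\<in>R. fval p d)] (mod int ?m)"
  proof (rule cong_sum)
    fix d assume "d \<in> R"
    hence d: "d dvd \<delta>" "d \<noteq> \<delta>" by (auto simp: R_def)
    have "d \<le> \<delta>" using d(1) less.prems(1) by (rule dvd_imp_le)
    hence "d < \<delta>" using d(2) by simp
    moreover have "d > 0" using d(1) less.prems(1) by (cases "d = 0") auto
    moreover have "d dvd totient ?m" using d(1) less.prems(2) by (rule dvd_trans)
    ultimately show "[ind_sum ?m d = fval p d] (mod int ?m)" using less.IH by blast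
  qed
  have mem: "\<delta> \<in> {d. d dvd \<delta>}" by simp
  have s1: "(\<Sum>d | d dvd \<delta>. ind_sum ?m d) = ind_sum ?m \<delta> + (\<Sum>d\<in>R. ind_sum ?m d)"
    unfolding R_def by (rule sum.remove[OF fin mem])
  have s2: "(\<Sum>d | d dvd \<delta>. fval p d) = fval p \<delta> + (\<Sum>d\<in>R. fval p d)"
    unfolding R_def by (rule sum.remove[OF fin mem])
  have "\<delta> dvd p ^ (\<alpha> - 1) * (p - 1)" using less.prems(2) totient_prime_power[OF p(1) \<alpha>] by simp
  hence fs: "(\<Sum>d | d dvd \<delta>. fval p d) = (if \<exists>j. \<delta> = p ^ j then int \<delta> else 0)"
    by (rule fval_sum[OF p(1) less.prems(1)])
  have "[(\<Sum>d | d dvd \<delta>. ind_sum ?m d) = (\<Sum>d | d dvd \<delta>. fval p d)] (mod int ?m)"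
    using Qlem[OF p \<alpha> less.prems] Plem[OF less.prems(1), of ?m] fs by simp
  hence "[ind_sum ?m \<delta> + (\<Sum>d\<in>R. ind_sum ?m d) = fval p \<delta> + (\<Sum>d\<in>R. fval p d)] (mod int ?m)"
    using s1 s2 by simp
  moreover have "[fval p \<delta> + (\<Sum>d\<in>R. ind_sum ?m d) = fval p \<delta> + (\<Sum>d\<in>R. fval p d)] (mod int ?m)"
    using IH by (rule cong_add[OF cong_refl])
  ultimately have "[ind_sum ?m \<delta> + (\<Sum>d\<in>R. ind_sum ?m d) = fval p \<delta> + (\<Sum>d\<in>R. ind_sum ?m d)] (mod int ?m)"
    using cong_trans cong_sym by blast
  thus ?case using cong_add_rcancel by blast
qed

lemma part5: "\<forall>(p::nat) (\<alpha>::nat) (\<delta>::nat). prime p \<and> odd p \<and> \<alpha> > 0 \<and> \<delta> > 0 \<and> \<delta> dvd Carmichael (p ^ \<alpha>) \<longrightarrow>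
        [ind_sum (p ^ \<alpha>) \<delta> = moebius_mu (gcd \<delta> (p - 1)) * int (totient (p ^ multiplicity p \<delta>))] (mod int (p ^ \<alpha>))"
proof (intro allI impI)
  fix p \<alpha> \<delta> :: nat
  assume a: "prime p \<and> odd p \<and> \<alpha> > 0 \<and> \<delta> > 0 \<and> \<delta> dvd Carmichael (p ^ \<alpha>)"
  hence "Carmichael (p ^ \<alpha>) = totient (p ^ \<alpha>)"
    using Carmichael_odd_prime_power totient_prime_power by simp
  hence "\<delta> dvd totient (p ^ \<alpha>)" using a by simp
  thus "[ind_sum (p ^ \<alpha>) \<delta> = moebius_mu (gcd \<delta> (p - 1)) * int (totient (p ^ multiplicity p \<delta>))] (mod int (p ^ \<alpha>))"
    using main5[of p \<alpha> \<delta>] a by (simp add: fval_def)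
qed

theorem theorem1p8:
  shows
   "(\<forall>\<delta>::nat. \<delta> > 0 \<and> \<delta> dvd Carmichael 2 \<longrightarrow> [ind_sum 2 \<delta> = 1] (mod 2))
  \<and> (\<forall>\<delta>::nat. \<delta> > 0 \<and> \<delta> dvd Carmichael 4 \<longrightarrow> [ind_sum 4 \<delta> = (-1) ^ (\<delta> + 1)] (mod 4))
  \<and> (\<forall>\<delta>::nat. \<delta> > 0 \<and> \<delta> dvd Carmichael 8 \<longrightarrow> [ind_sum 8 \<delta> = (-1) ^ (\<delta> + 1)] (mod 8))
  \<and> (\<forall>\<alpha> \<beta> :: nat. \<alpha> > 3 \<and> 1 < \<beta> \<and> \<beta> \<le> \<alpha> - 2 \<longrightarrow>
        [ind_sum (2 ^ \<alpha>) (2 ^ \<beta>) = 0] (mod 2 ^ \<alpha>))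
  \<and> (\<forall>(p::nat) (\<alpha>::nat) (\<delta>::nat). prime p \<and> odd p \<and> \<alpha> > 0 \<and> \<delta> > 0 \<and> \<delta> dvd Carmichael (p ^ \<alpha>) \<longrightarrow>
        [ind_sum (p ^ \<alpha>) \<delta> = moebius_mu (gcd \<delta> (p - 1)) * int (totient (p ^ multiplicity p \<delta>))] (mod int (p ^ \<alpha>)))"
    using part1 part2 part3 part4 part5 by blast

end
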